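(* Let $k\ge 2$ and $\alpha_i=\frac{1}{k-1}$ for all $1\le i\le k$. For an integer $g\ge0$ let $\ell$ be the least nonnegative residue of $g$ modulo $k-1$. Then the number $f(g)$ of $\alpha$-communal $k$-tuples with entries summing to $g$ is \[ f(g)=\binom{\frac{g-\ell k}{k-1}+k-1}{k-1}, \] and \[ \sum_{g\ge 0}f(g)x^g=\frac{1-x^{k(k-1)}}{(1-x^k)(1-x^{k-1})^k}. \]
   Context: A $k$-tuple $[g_1,\dots,g_k]$ of integers is $\alpha$-communal if $0\le g_i\le \alpha_i\sum_{j=1}^k g_j$ for every $i$. Binomial coefficients $\binom{n}{r}$ are $0$ for $0\le n<r$. *)

theory Defs
  imports Complex_Main "HOL-Computational_Algebra.Formal_Power_Series"
begin

definition communal :: "(nat \<Rightarrow> real) \<Rightarrow> int list \<Rightarrow> bool" where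
  "communal \<alpha> gs \<longleftrightarrow>
     (\<forall>i<length gs. 0 \<le> gs ! i \<and> real_of_int (gs ! i) \<le> \<alpha> i * real_of_int (sum_list gs))"

definition communal_count :: "nat \<Rightarrow> (nat \<Rightarrow> real) \<Rightarrow> int \<Rightarrow> nat" where
  "communal_count k \<alpha> g =
     card {gs :: int list. length gs = k \<and> sum_list gs = g \<and> communal \<alpha> gs}"

end

theory Submission
  imports Defs
begin

lemma sum_list_int_sub: "sum_list (map (\<lambda>h. q - int h) hs) = int (length hs) * q - int (sum_list hs)"
  by (induction hs) (auto simp: algebra_simps)

lemma sum_list_int_sub2: "sum_list (map (\<lambda>x. q - x) gs) = int (length gs) * q - sum_list (gs::int list)"
  by (induction gs) (auto simp: algebra_simps)

lemma le_div_real: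
  fixes x :: int and m n :: nat
  assumes "m > 0"
  shows "(real_of_int x \<le> 1 / real m * real_of_int (int n)) \<longleftrightarrow> x \<le> int (n div m)"
proof -
  have "(real_of_int x \<le> 1 / real m * real_of_int (int n)) \<longleftrightarrow> x \<le> \<lfloor>real_of_int (int n) / real_of_int (int m)\<rfloor>"
    by (simp add: le_floor_iff)
  also have "\<lfloor>real_of_int (int n) / real_of_int (int m)\<rfloor> = int n div int m"
    by (rule floor_divide_of_int_eq)
  finally show ?thesis by (simp add: zdiv_int)
qed

lemma count_formula:
  assumes "m > 0"
  shows "communal_count (Suc m) (\<lambda>i. 1 / real m) (int n) =
    (if n mod m \<le> n div m then (n div m - n mod m + m) choose m else 0)"
proof -
  define q where "q = n div m"
  define l where "l = n mod m"
  have n: "n = q * m + l" by (simp add: q_def l_def)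
  let ?S = "{gs :: int list. length gs = Suc m \<and> sum_list gs = int n \<and> communal (\<lambda>i. 1 / real m) gs}"
  have mem: "gs \<in> ?S \<longleftrightarrow> length gs = Suc m \<and> sum_list gs = int n \<and> (\<forall>i<Suc m. 0 \<le> gs ! i \<and> gs ! i \<le> int q)" for gs
    unfolding communal_def using le_div_real[OF assms] q_def by auto
  show ?thesis
  proof (cases "l \<le> q")
    case True
    let ?T = "{hs :: nat list. length hs = Suc m \<and> sum_list hs = q - l}"
    have "?S = map (\<lambda>h. int q - int h) ` ?T"
    proof (intro set_eqI iffI)
      fix gs assume g: "gs \<in> ?S"
      hence g': "length gs = Suc m" "sum_list gs = int n" "\<forall>i<Suc m. 0 \<le> gs ! i \<and> gs ! i \<le> int q"
        using mem by auto
      have gset: "\<forall>x\<in>set gs. 0 \<le> x \<and> x \<le> int q" using g' by (auto simp: in_set_conv_nth)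
      define hs where "hs = map (\<lambda>x. nat (int q - x)) gs"
      have "map (\<lambda>h. int q - int h) hs = gs"
        unfolding hs_def using g' by (auto intro!: nth_equalityI)
      moreover have "int (sum_list hs) = int (q - l)"
      proof -
        have "map int hs = map (\<lambda>x. int q - x) gs"
          unfolding hs_def using gset by (auto intro!: map_cong)
        hence "int (sum_list hs) = sum_list (map (\<lambda>x. int q - x) gs)"
          by (metis sum_list_of_nat)
        also have "\<dots> = int (Suc m) * int q - int n" using g' by (simp add: sum_list_int_sub2)
        finally show ?thesis using True n by (simp add: algebra_simps of_nat_diff)
      qed
      ultimately show "gs \<in> map (\<lambda>h. int q - int h) ` ?T"
        using g' unfolding hs_def by (intro image_eqI[of _ _ hs]) (auto simp: hs_def)
    next
      fix gs assume "gs \<in> map (\<lambda>h. int q - int h) ` ?T"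
      then obtain hs where hs: "length hs = Suc m" "sum_list hs = q - l" and gs: "gs = map (\<lambda>h. int q - int h) hs"
        by auto
      have "sum_list gs = int n" using hs True n by (simp add: gs sum_list_int_sub algebra_simps of_nat_diff)
      moreover have "0 \<le> gs ! i \<and> gs ! i \<le> int q" if "i < Suc m" for i
        using elem_le_sum_list[of i hs] that hs by (auto simp: gs)
      ultimately show "gs \<in> ?S" using mem hs gs by auto
    qed
    moreover have "inj_on (map (\<lambda>h. int q - int h)) ?T"
      by (intro inj_onI) (auto simp: inj_def inj_map_eq_map)
    ultimately have "card ?S = card ?T" by (simp add: card_image)
    also have "\<dots> = (q - l + m) choose (q - l)" using card_length_sum_list[of "Suc m" "q - l"] by simp
    also have "\<dots> = (q - l + m) choose m" using binomial_symmetric[of m "q - l + m"] by simp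
    finally show ?thesis using True unfolding communal_count_def q_def l_def by simp
  next
    case False
    have "?S = {}"
    proof (rule ccontr)
      assume "?S \<noteq> {}"
      then obtain gs where "gs \<in> ?S" by blast
      hence g': "length gs = Suc m" "sum_list gs = int n" "\<forall>i<Suc m. 0 \<le> gs ! i \<and> gs ! i \<le> int q"
        using mem by auto
      have "0 \<le> sum_list (map (\<lambda>x. int q - x) gs)"
        by (rule sum_list_nonneg) (use g' in \<open>auto simp: in_set_conv_nth\<close>)
      also have "\<dots> = int (Suc m) * int q - int n" using g' by (simp add: sum_list_int_sub2)
      finally show False using False n by (simp add: algebra_simps)
    qed
    have "communal_count (Suc m) (\<lambda>i. 1 / real m) (int n) = card ?S" by (simp only: communal_count_def)
    also have "\<dots> = 0" using \<open>?S = {}\<close> by (simp only: card.empty)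
    finally show ?thesis using False by (simp add: q_def l_def)
  qed
qed

definition QQ :: "nat \<Rightarrow> nat \<Rightarrow> real fps" where
  "QQ m j = Abs_fps (\<lambda>n. if m dvd n then real (n div m + j choose j) else 0)"

lemma QQ_step:
  assumes "m > 0"
  shows "QQ m (Suc j) * (1 - fps_X ^ m) = QQ m j" "QQ m 0 * (1 - fps_X ^ m) = 1"
proof -
  have c: "fps_nth (QQ m i * (1 - fps_X ^ m)) n = fps_nth (QQ m i) n - (if n < m then 0 else fps_nth (QQ m i) (n - m))" for i n
    by (simp add: algebra_simps fps_X_power_mult_nth mult.commute[of "QQ m i"])
  show "QQ m (Suc j) * (1 - fps_X ^ m) = QQ m j"
  proof (rule fps_ext)
    fix n
    show "fps_nth (QQ m (Suc j) * (1 - fps_X ^ m)) n = fps_nth (QQ m j) n"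
    proof (cases "m dvd n")
      case True
      then obtain a where a: "n = m * a" by blast
      show ?thesis
      proof (cases a)
        case 0 thus ?thesis using assms a by (subst c) (simp add: QQ_def)
      next
        case (Suc b)
        have "n - m = m * b" using a Suc by (simp add: algebra_simps)
        hence "fps_nth (QQ m (Suc j) * (1 - fps_X ^ m)) n = real (Suc b + Suc j choose Suc j) - real (b + Suc j choose Suc j)"
          using assms a Suc by (subst c) (simp add: QQ_def)
        also have "\<dots> = real (b + Suc j choose j)" by simp
        also have "\<dots> = fps_nth (QQ m j) n" using assms a Suc by (simp add: QQ_def)
        finally show ?thesis .
      qed
    next
      case False
      hence "\<not> m dvd (n - m)" if "\<not> n < m" using that
        by (metis dvd_diff_nat dvd_refl le_add_diff_inverse2 not_less dvd_add)
      thus ?thesis using False by (subst c) (simp add: QQ_def)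
    qed
  qed
  show "QQ m 0 * (1 - fps_X ^ m) = 1"
  proof (rule fps_ext)
    fix n
    show "fps_nth (QQ m 0 * (1 - fps_X ^ m)) n = fps_nth 1 n"
    proof (cases "m dvd n")
      case True
      then obtain a where a: "n = m * a" by blast
      show ?thesis
      proof (cases a)
        case 0 thus ?thesis using assms a by (subst c) (simp add: QQ_def)
      next
        case (Suc b)
        have "n - m = m * b" using a Suc by (simp add: algebra_simps)
        thus ?thesis using assms a Suc by (subst c) (simp add: QQ_def)
      qed
    next
      case False
      hence "\<not> m dvd (n - m)" if "\<not> n < m" using that
        by (metis dvd_diff_nat dvd_refl le_add_diff_inverse2 not_less dvd_add)
      moreover have "n \<noteq> 0" using False by (metis dvd_0_right)
      ultimately show ?thesis using False by (subst c) (simp add: QQ_def)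
    qed
  qed
qed

lemma QQ_inv:
  assumes "m > 0"
  shows "QQ m j * (1 - fps_X ^ m) ^ Suc j = 1"
proof (induction j)
  case 0 thus ?case using QQ_step(2)[OF assms] by simp
next
  case (Suc j)
  have "QQ m (Suc j) * (1 - fps_X ^ m) ^ Suc (Suc j) = (QQ m (Suc j) * (1 - fps_X ^ m)) * (1 - fps_X ^ m) ^ Suc j"
    by (simp only: power_Suc mult_ac)
  also have "\<dots> = 1" using QQ_step(1)[OF assms] Suc by simp
  finally show ?case .
qed

lemma coeff_sum:
  assumes m: "m > 0"
  shows "(\<Sum>l<m. if n < l * Suc m then 0 else fps_nth (QQ m m) (n - l * Suc m)) =
    (if n mod m \<le> n div m then real ((n div m - n mod m + m) choose m) else 0)"
proof -
  define q where "q = n div m"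
  define l0 where "l0 = n mod m"
  have n: "n = q * m + l0" by (simp add: q_def l0_def)
  have l0m: "l0 < m" using m by (simp add: l0_def)
  let ?t = "\<lambda>l. if n < l * Suc m then 0 else fps_nth (QQ m m) (n - l * Suc m)"
  have z: "?t l = 0" if "l < m" "l \<noteq> l0" for l
  proof (rule ccontr)
    assume "?t l \<noteq> 0"
    hence le: "l * Suc m \<le> n" and d: "m dvd (n - l * Suc m)" by (auto simp: QQ_def split: if_splits)
    then obtain t where t: "n - l * Suc m = m * t" by blast
    hence "n = l + m * (l + t)" using le by (simp add: algebra_simps)
    hence "n mod m = l" using that(1) by simp
    thus False using that(2) l0_def by simp
  qed
  have "(\<Sum>l<m. ?t l) = ?t l0 + (\<Sum>l\<in>{..<m} - {l0}. ?t l)"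
    using l0m by (subst sum.remove[of _ l0]) auto
  also have "(\<Sum>l\<in>{..<m} - {l0}. ?t l) = 0" using z by (intro sum.neutral) auto
  also have "?t l0 = (if l0 \<le> q then real ((q - l0 + m) choose m) else 0)"
  proof (cases "l0 \<le> q")
    case True
    have e: "n - l0 * Suc m = m * (q - l0)" using True n by (simp add: algebra_simps diff_mult_distrib2)
    have "\<not> n < l0 * Suc m" using True n by (simp add: algebra_simps)
    hence "?t l0 = fps_nth (QQ m m) (m * (q - l0))" by (simp only: e if_False)
    also have "\<dots> = real ((q - l0 + m) choose m)" using m by (simp add: QQ_def)
    finally show ?thesis using True by simp
  next
    case False
    have "n < l0 * Suc m" using False n l0m
      by (simp add: algebra_simps)
    thus ?thesis using False by simp
  qed
  finally show ?thesis by (simp add: q_def l0_def)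
qed

theorem mainTheorem10:
  fixes k :: nat and \<alpha> :: "nat \<Rightarrow> real"
  assumes "k \<ge> 2"
    and "\<alpha> = (\<lambda>i. 1 / real (k - 1))"
  shows "(\<forall>g::nat. communal_count k \<alpha> (int g) =
            nat ((int g - int (g mod (k - 1)) * int k) div int (k - 1) + int k - 1) choose (k - 1))
       \<and> Abs_fps (\<lambda>g. real (communal_count k \<alpha> (int g)))
           = (1 - fps_X ^ (k * (k - 1))) / ((1 - fps_X ^ k) * (1 - fps_X ^ (k - 1)) ^ k)"
proof -
  define m where "m = k - 1"
  have m: "m > 0" using assms(1) by (simp add: m_def)
  have k: "k = Suc m" using assms(1) by (simp add: m_def)
  have km: "k - 1 = m" by (simp add: m_def)
  have cc: "communal_count k \<alpha> (int g) =
    (if g mod m \<le> g div m then (g div m - g mod m + m) choose m else 0)" for g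
    using count_formula[OF m, of g] assms(2) k by simp
  have part1: "communal_count k \<alpha> (int g) =
            nat ((int g - int (g mod (k - 1)) * int k) div int (k - 1) + int k - 1) choose (k - 1)" for g
  proof -
    define q where "q = g div m"
    define l where "l = g mod m"
    have g: "g = q * m + l" by (simp add: q_def l_def)
    have "int g - int l * int k = (int q - int l) * int m" using g k by (simp add: algebra_simps)
    hence "(int g - int l * int k) div int m = int q - int l" using m by simp
    hence e: "nat ((int g - int l * int k) div int m + int k - 1) = nat (int q - int l + int m)"
      using k by simp
    show ?thesis
    proof (cases "l \<le> q")
      case True
      hence "nat (int q - int l + int m) = q - l + m" by simp
      thus ?thesis unfolding km using True e cc[of g] by (simp add: q_def l_def)
    next
      case False
      hence "nat (int q - int l + int m) < m" using m by arith
      hence "nat (int q - int l + int m) choose m = 0" by simp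
      thus ?thesis unfolding km using False e cc[of g] by (simp add: q_def l_def)
    qed
  qed
  define F where "F = Abs_fps (\<lambda>g. real (communal_count k \<alpha> (int g)))"
  define P :: "real fps" where "P = (\<Sum>i<m. (fps_X ^ k) ^ i)"
  have FPQ: "F = P * QQ m m"
  proof (rule fps_ext)
    fix n
    have "P * QQ m m = (\<Sum>l<m. fps_X ^ (l * Suc m) * QQ m m)"
      unfolding P_def sum_distrib_right
    proof (rule sum.cong[OF refl])
      fix l show "(fps_X ^ k) ^ l * QQ m m = fps_X ^ (l * Suc m) * QQ m m"
        by (metis k power_mult mult.commute)
    qed
    hence "fps_nth (P * QQ m m) n = (\<Sum>l<m. fps_nth (fps_X ^ (l * Suc m) * QQ m m) n)"
      by (simp only: fps_sum_nth)
    also have "\<dots> = (\<Sum>l<m. if n < l * Suc m then 0 else fps_nth (QQ m m) (n - l * Suc m))"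
      by (simp only: fps_X_power_mult_nth)
    also have "\<dots> = fps_nth F n" using coeff_sum[OF m, of n] by (simp add: F_def cc)
    finally show "fps_nth F n = fps_nth (P * QQ m m) n" by simp
  qed
  have PA: "P * (1 - fps_X ^ k) = 1 - fps_X ^ (k * m)"
    unfolding P_def by (simp add: one_diff_power_eq[of "fps_X ^ k" m] power_mult mult.commute)
  define B :: "real fps" where "B = (1 - fps_X ^ k) * (1 - fps_X ^ m) ^ k"
  have FB: "F * B = 1 - fps_X ^ (k * m)"
  proof -
    have "F * B = (P * (1 - fps_X ^ k)) * (QQ m m * (1 - fps_X ^ m) ^ Suc m)"
      by (simp add: FPQ B_def k mult_ac)
    also have "\<dots> = 1 - fps_X ^ (k * m)" using PA QQ_inv[OF m, of m] by simp
    finally show ?thesis .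
  qed
  have B0: "fps_nth B 0 \<noteq> 0" using m k by (simp add: B_def)
  have "(1 - fps_X ^ (k * m)) / B = F * B * inverse B"
    using FB B0 by (simp add: fps_divide_unit)
  also have "\<dots> = F" using inverse_mult_eq_1'[OF B0] by (simp add: mult.assoc)
  finally have "F = (1 - fps_X ^ (k * m)) / B" by simp
  thus ?thesis using part1 unfolding F_def B_def m_def by simp
qed

end
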